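(* Let $k$ be a field of characteristic zero, $n\ge1$, $S=k[x_1,\ldots,x_n]$, and $(S,L)$ a Lie–Rinehart algebra with $L$ a free $S$-module with basis $\alpha_1,\ldots,\alpha_n$, with enveloping algebra $U$. Let $p\geq0$. (i) If $u\in F_pU$ and $\{f^I:I\in\mathbb{N}^n,|I|=p\}\subset S$ satisfy $u\equiv\sum_{|I|=p}f^I\alpha^I \pmod{F_{p-1}U}$, then $$d^0(u)\equiv\sum_{|J|=p-1}d^0\Big(\Omega^0\big((j_n+1)f^{J+e_n},(j_{n-1}+1)f^{J+e_{n-1}},\ldots,(j_1+1)f^{J+e_1}\big)\Big)\alpha^J \pmod{F_{p-2}\mathcal{X}^1},$$ where $J=(j_n,\ldots,j_1)$. (ii) If $\omega\in F_p\mathcal{X}^1$ and $\{f^I_l: I\in\mathbb{N}^n,|I|=p,l\in\{1,\ldots,n\}\}\subset S$ satisfy $\omega\equiv\sum_{l=1}^n\sum_{|I|=p}f^I_l\alpha^I\hat{x}_l\pmod{F_{p-1}\mathcal{X}^1}$, then, writing $f^I=(f^I_1,\ldots,f^I_n)$, $$d^1(\omega)\equiv\sum_{|J|=p-1}d^1\Big(\Omega^1\big((j_n+1)f^{J+e_n},\ldots,(j_1+1)f^{J+e_1}\big)\Big)\alpha^J\pmod{F_{p-2}\mathcal{X}^2}.$$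
   Context: Write $\alpha_i(s)$ for the action of $\alpha_i$ on $s\in S$. For $I=(i_n,\ldots,i_1)\in\mathbb{N}^n$ put $\alpha^I=\alpha_n^{i_n}\cdots\alpha_1^{i_1}\in U$ and $|I|=i_n+\cdots+i_1$; the $\alpha^I$ form a basis of $U$ as a left $S$-module. $F_pU$ is the $S$-span of the $\alpha^I$ with $|I|\le p$ ($F_pU=0$ for $p<0$). For $m\in\{1,\ldots,n\}$, $e_m\in\mathbb{N}^n$ is the tuple with $1$ in the entry indexed by $m$ and $0$ elsewhere (so $\alpha^{I+e_m}$ raises the exponent of $\alpha_m$ by one). Let $W=\operatorname{span}_k(x_1,\ldots,x_n)$, $\hat x_1,\ldots,\hat x_n$ the dual basis, and $\mathcal{X}^q=U\otimes_k\operatorname{Hom}_k(\Lambda^qW,k)$, whose elements are written $\sum_K u_K\,\hat x_{k_1}\wedge\cdots\wedge\hat x_{k_q}$ with $u_K\in U$ (this is the complex computing the Hochschild cohomology $H^\bullet(S,U)$ obtained from the Koszul resolution of $S$). The differentials satisfy $d^0(u)=\sum_{k=1}^n[u,x_k]\hat x_k$ and $d^1(\sum_k u_k\hat x_k)=\sum_{1\le k<l\le n}([u_k,x_l]-[u_l,x_k])\hat x_k\wedge\hat x_l$. $F_p\mathcal{X}^q$ is the $k$-span of the elements $f\alpha^I\hat x_{k_1}\wedge\cdots\wedge\hat x_{k_q}$ with $f\in S$, $|I|\le p$. For $g^1,\ldots,g^n\in S$, $\Omega^0(g^n,\ldots,g^1)=\sum_{i=1}^n g^i\alpha_i\in U$;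 for $f^1,\ldots,f^n\in S^n$ with $f^i=(f^i_1,\ldots,f^i_n)$, $\Omega^1(f^n,\ldots,f^1)=\sum_{k=1}^n\sum_{i=1}^nf^i_k\alpha_i\hat x_k\in\mathcal{X}^1$. For an element $\sum_K c_K\hat x_K$ with all $c_K\in S$, the product $(\sum_Kc_K\hat x_K)\alpha^J$ means $\sum_K c_K\alpha^J\hat x_K$. *)

theory Defs
  imports Main
begin

fun oprod :: "(nat \<Rightarrow> 'a::monoid_mult) \<Rightarrow> nat \<Rightarrow> 'a" where
  "oprod g 0 = 1"
| "oprod g (Suc m) = g (Suc m) * oprod g m"

text \<open>Multi-indices I = (i_n,...,i_1), represented as functions nat => nat supported on {1..n}.\<close>
definition idx :: "nat \<Rightarrow> (nat \<Rightarrow> nat) set" where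
  "idx n = {I. \<forall>i. (i = 0 \<or> n < i) \<longrightarrow> I i = 0}"

definition absI :: "nat \<Rightarrow> (nat \<Rightarrow> nat) \<Rightarrow> nat" where
  "absI n I = (\<Sum>i=1..n. I i)"

definition mpow :: "(nat \<Rightarrow> 'a::monoid_mult) \<Rightarrow> nat \<Rightarrow> (nat \<Rightarrow> nat) \<Rightarrow> 'a" where
  "mpow a n I = oprod (\<lambda>i. a i ^ I i) n"

definition incI :: "(nat \<Rightarrow> nat) \<Rightarrow> nat \<Rightarrow> (nat \<Rightarrow> nat)" where
  "incI J m = J(m := Suc (J m))"

definition idx_deg :: "nat \<Rightarrow> int \<Rightarrow> (nat \<Rightarrow> nat) set" where
  "idx_deg n p = {I \<in> idx n. int (absI n I) = p}"

definition Fil :: "'u::ring_1 set \<Rightarrow> (nat \<Rightarrow> 'u) \<Rightarrow> nat \<Rightarrow> int \<Rightarrow> 'u set" where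
  "Fil S \<alpha> n p = {u. \<exists>f. (\<forall>I. f I \<in> S) \<and>
       u = (\<Sum>I\<in>{I \<in> idx n. int (absI n I) \<le> p}. f I * mpow \<alpha> n I)}"

text \<open>Elements of X^1 are represented by their coefficient functions k |-> u_k (k in {1..n}),
  elements of X^2 by (k,l) |-> u_{kl} (1 <= k < l <= n).\<close>
definition FX1 :: "'u::ring_1 set \<Rightarrow> (nat \<Rightarrow> 'u) \<Rightarrow> nat \<Rightarrow> int \<Rightarrow> (nat \<Rightarrow> 'u) set" where
  "FX1 S \<alpha> n p = {\<omega>. \<forall>k\<in>{1..n}. \<omega> k \<in> Fil S \<alpha> n p}"

definition FX2 :: "'u::ring_1 set \<Rightarrow> (nat \<Rightarrow> 'u) \<Rightarrow> nat \<Rightarrow> int \<Rightarrow> (nat \<Rightarrow> nat \<Rightarrow> 'u) set" where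
  "FX2 S \<alpha> n p = {\<omega>. \<forall>k l. 1 \<le> k \<and> k < l \<and> l \<le> n \<longrightarrow> \<omega> k l \<in> Fil S \<alpha> n p}"

definition comm :: "'u::ring_1 \<Rightarrow> 'u \<Rightarrow> 'u" where
  "comm a b = a * b - b * a"

definition d0 :: "(nat \<Rightarrow> 'u::ring_1) \<Rightarrow> 'u \<Rightarrow> (nat \<Rightarrow> 'u)" where
  "d0 x u = (\<lambda>k. comm u (x k))"

definition d1 :: "(nat \<Rightarrow> 'u::ring_1) \<Rightarrow> (nat \<Rightarrow> 'u) \<Rightarrow> (nat \<Rightarrow> nat \<Rightarrow> 'u)" where
  "d1 x \<omega> = (\<lambda>k l. comm (\<omega> k) (x l) - comm (\<omega> l) (x k))"

text \<open>Omega^0(g^n,...,g^1) = sum_i g^i alpha_i ; Omega^1(f^n,...,f^1) = sum_k sum_i f^i_k alpha_i xhat_k,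
  where f i k stands for f^i_k.\<close>
definition Omega0 :: "(nat \<Rightarrow> 'u::ring_1) \<Rightarrow> nat \<Rightarrow> (nat \<Rightarrow> 'u) \<Rightarrow> 'u" where
  "Omega0 \<alpha> n g = (\<Sum>i=1..n. g i * \<alpha> i)"

definition Omega1 :: "(nat \<Rightarrow> 'u::ring_1) \<Rightarrow> nat \<Rightarrow> (nat \<Rightarrow> nat \<Rightarrow> 'u) \<Rightarrow> (nat \<Rightarrow> 'u)" where
  "Omega1 \<alpha> n f = (\<lambda>k. \<Sum>i=1..n. f i k * \<alpha> i)"

text \<open>The setting: U (the whole type 'u) is an associative k-algebra, k = K a central subfield of
  characteristic zero; S = K[x_1,...,x_n] a polynomial subring; alpha_1..alpha_n span L = free
  S-module, with the Lie-Rinehart relations [alpha_i,s] = alpha_i(s) in S and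
  [alpha_i,alpha_j] in L; and the PBW monomials alpha^I form a basis of U as left S-module.
  (Up to isomorphism, these data are exactly the enveloping algebra of such a Lie-Rinehart
  algebra (S,L).)\<close>
definition LR_env :: "'u::ring_1 set \<Rightarrow> 'u set \<Rightarrow> (nat \<Rightarrow> 'u) \<Rightarrow> (nat \<Rightarrow> 'u) \<Rightarrow> nat \<Rightarrow> bool" where
  "LR_env K S x \<alpha> n \<longleftrightarrow>
     \<comment> \<open>K is a field of characteristic zero, central in U\<close>
     0 \<in> K \<and> 1 \<in> K \<and>
     (\<forall>a\<in>K. \<forall>b\<in>K. a + b \<in> K \<and> a * b \<in> K \<and> - a \<in> K) \<and>
     (\<forall>a\<in>K. a \<noteq> 0 \<longrightarrow> (\<exists>b\<in>K. a * b = 1)) \<and>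
     (\<forall>m::nat. 0 < m \<longrightarrow> (of_nat m :: 'u) \<noteq> 0) \<and>
     (\<forall>c\<in>K. \<forall>u. c * u = u * c) \<and>
     \<comment> \<open>S = K[x_1,...,x_n], a commutative polynomial ring\<close>
     (\<forall>i\<in>{1..n}. x i \<in> S) \<and>
     (\<forall>a\<in>S. \<forall>b\<in>S. a * b = b * a) \<and>
     S = {\<Sum>a\<in>A. c a * mpow x n a | A c. finite A \<and> A \<subseteq> idx n \<and> (\<forall>a\<in>A. c a \<in> K)} \<and>
     (\<forall>A c. finite A \<and> A \<subseteq> idx n \<and> (\<forall>a\<in>A. c a \<in> K) \<and> (\<Sum>a\<in>A. c a * mpow x n a) = 0
        \<longrightarrow> (\<forall>a\<in>A. c a = 0)) \<and>
     \<comment> \<open>Lie-Rinehart relations: anchor and bracket\<close>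
     (\<forall>i\<in>{1..n}. \<forall>s\<in>S. comm (\<alpha> i) s \<in> S) \<and>
     (\<forall>i\<in>{1..n}. \<forall>j\<in>{1..n}. \<exists>c. (\<forall>l. c l \<in> S) \<and> comm (\<alpha> i) (\<alpha> j) = (\<Sum>l=1..n. c l * \<alpha> l)) \<and>
     \<comment> \<open>the alpha^I form a basis of U as a left S-module\<close>
     (\<forall>u. \<exists>A f. finite A \<and> A \<subseteq> idx n \<and> (\<forall>I\<in>A. f I \<in> S) \<and> u = (\<Sum>I\<in>A. f I * mpow \<alpha> n I)) \<and>
     (\<forall>A f. finite A \<and> A \<subseteq> idx n \<and> (\<forall>I\<in>A. f I \<in> S) \<and> (\<Sum>I\<in>A. f I * mpow \<alpha> n I) = 0
        \<longrightarrow> (\<forall>I\<in>A. f I = 0))"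

end

theory Submission
  imports Defs
begin


lemma oprod_cong: "(\<And>i. 1 \<le> i \<Longrightarrow> i \<le> m \<Longrightarrow> g i = h i) \<Longrightarrow> oprod g m = oprod h m"
  by (induction m) auto

lemma oprod_commute:
  "(\<And>i. 1 \<le> i \<Longrightarrow> i \<le> m \<Longrightarrow> g i * z = z * g i) \<Longrightarrow> oprod g m * z = z * oprod g m"
proof (induction m)
  case 0 then show ?case by simp
next
  case (Suc m)
  have "oprod g (Suc m) * z = g (Suc m) * (oprod g m * z)" by (simp add: mult.assoc)
  also have "\<dots> = g (Suc m) * (z * oprod g m)" using Suc by simp
  also have "\<dots> = z * oprod g (Suc m)" using Suc.prems[of "Suc m"] by (simp flip: mult.assoc)
  finally show ?case .
qed

lemma oprod_pow_add:
  assumes "\<And>i j. 1 \<le> i \<Longrightarrow> i \<le> m \<Longrightarrow> 1 \<le> j \<Longrightarrow> j \<le> m \<Longrightarrow> y i * y j = y j * y i"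
  shows "oprod (\<lambda>i. y i ^ a i) m * oprod (\<lambda>i. y i ^ b i) m = oprod (\<lambda>i. y i ^ (a i + b i)) m"
  using assms
proof (induction m)
  case 0 then show ?case by simp
next
  case (Suc m)
  have c: "oprod (\<lambda>i. y i ^ a i) m * y (Suc m) ^ b (Suc m) = y (Suc m) ^ b (Suc m) * oprod (\<lambda>i. y i ^ a i) m"
  proof (rule oprod_commute)
    fix i assume "1 \<le> i" "i \<le> m"
    then have "y i * y (Suc m) = y (Suc m) * y i" using Suc.prems[of i "Suc m"] by simp
    then have "y (Suc m) * y i = y i * y (Suc m)" by simp
    then have "y (Suc m) ^ b (Suc m) * y i = y i * y (Suc m) ^ b (Suc m)" by (rule power_commuting_commutes)
    then have "y i * y (Suc m) ^ b (Suc m) = y (Suc m) ^ b (Suc m) * y i" by simp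
    then show "y i ^ a i * y (Suc m) ^ b (Suc m) = y (Suc m) ^ b (Suc m) * y i ^ a i"
      by (rule power_commuting_commutes)
  qed
  have "oprod (\<lambda>i. y i ^ a i) (Suc m) * oprod (\<lambda>i. y i ^ b i) (Suc m)
     = y (Suc m) ^ a (Suc m) * (oprod (\<lambda>i. y i ^ a i) m * y (Suc m) ^ b (Suc m)) * oprod (\<lambda>i. y i ^ b i) m"
    by (simp add: mult.assoc)
  also have "\<dots> = y (Suc m) ^ a (Suc m) * y (Suc m) ^ b (Suc m) * (oprod (\<lambda>i. y i ^ a i) m * oprod (\<lambda>i. y i ^ b i) m)"
    by (simp add: c mult.assoc)
  also have "\<dots> = oprod (\<lambda>i. y i ^ (a i + b i)) (Suc m)"
    using Suc by (simp add: power_add)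
  finally show ?case .
qed

lemma oprod_incI_top:
  assumes "1 \<le> i" "i \<le> m" "\<And>l. i < l \<Longrightarrow> l \<le> m \<Longrightarrow> J l = 0"
  shows "oprod (\<lambda>l. a l ^ incI J i l) m = a i * oprod (\<lambda>l. a l ^ J l) m"
  using assms
proof (induction m)
  case 0 then show ?case by simp
next
  case (Suc m)
  show ?case
  proof (cases "i = Suc m")
    case True
    have "oprod (\<lambda>l. a l ^ incI J i l) m = oprod (\<lambda>l. a l ^ J l) m"
      by (rule oprod_cong) (use True in \<open>auto simp: incI_def\<close>)
    then show ?thesis using True by (simp add: incI_def mult.assoc)
  next
    case False
    then have "i \<le> m" using Suc by simp
    then have "oprod (\<lambda>l. a l ^ incI J i l) m = a i * oprod (\<lambda>l. a l ^ J l) m"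
      using Suc by simp
    moreover have "J (Suc m) = 0" using Suc False by simp
    ultimately show ?thesis using False by (simp add: incI_def)
  qed
qed

lemma mpow_incI_top:
  assumes "1 \<le> i" "i \<le> n" "\<And>l. i < l \<Longrightarrow> l \<le> n \<Longrightarrow> J l = 0"
  shows "mpow a n (incI J i) = a i * mpow a n J"
  using oprod_incI_top[OF assms] by (simp add: mpow_def)

lemma mpow_zero: "mpow a n (\<lambda>_. 0) = 1"
proof -
  have "oprod (\<lambda>i. a i ^ 0) n = 1" by (induction n) auto
  then show ?thesis by (simp add: mpow_def)
qed

lemma finite_idx_le: "finite {I \<in> idx n. absI n I \<le> N}"
proof -
  have "{I \<in> idx n. absI n I \<le> N} \<subseteq> {f. \<forall>x. (x \<in> {1..n} \<longrightarrow> f x \<in> {0..N}) \<and> (x \<notin> {1..n} \<longrightarrow> f x = 0)}"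
  proof (safe)
    fix I x assume I: "I \<in> idx n" "absI n I \<le> N"
    { assume "x \<in> {1..n}"
      then have "I x \<le> absI n I" unfolding absI_def
        by (intro member_le_sum) auto
      then show "I x \<in> {0..N}" using I by simp }
    { assume "x \<notin> {1..n}" then show "I x = 0" using I unfolding idx_def by (cases "x = 0") auto }
  qed
  then show ?thesis by (rule finite_subset) (intro finite_set_of_finite_funs; simp)
qed

lemma finite_Fil_set: "finite {I \<in> idx n. int (absI n I) \<le> p}"
  by (rule finite_subset[OF _ finite_idx_le[of n "nat p"]]) auto

lemma finite_idx_deg: "finite (idx_deg n p)"
  unfolding idx_deg_def by (rule finite_subset[OF _ finite_Fil_set[of n p]]) auto



locale lr =
  fixes K S :: "'u::ring_1 set" and x \<alpha> :: "nat \<Rightarrow> 'u" and n :: nat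
  assumes env: "LR_env K S x \<alpha> n"
begin

lemma K_cl: "\<forall>a\<in>K. \<forall>b\<in>K. a + b \<in> K \<and> a * b \<in> K \<and> - a \<in> K"
  using env unfolding LR_env_def by (elim conjE) assumption
lemma K_0: "0 \<in> K" using env unfolding LR_env_def by (elim conjE) assumption
lemma K_1: "1 \<in> K" using env unfolding LR_env_def by (elim conjE) assumption
lemma K_add: "a \<in> K \<Longrightarrow> b \<in> K \<Longrightarrow> a + b \<in> K" using K_cl by simp
lemma K_mult: "a \<in> K \<Longrightarrow> b \<in> K \<Longrightarrow> a * b \<in> K" using K_cl by simp
lemma K_neg: "a \<in> K \<Longrightarrow> - a \<in> K" using K_cl by simp
lemma K_central0: "\<forall>c\<in>K. \<forall>u. c * u = u * c" using env unfolding LR_env_def by (elim conjE) assumption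
lemma K_central: "c \<in> K \<Longrightarrow> c * u = u * c" using K_central0 by blast
lemma x_S0: "\<forall>i\<in>{1..n}. x i \<in> S" using env unfolding LR_env_def by (elim conjE) assumption
lemma x_S: "1 \<le> i \<Longrightarrow> i \<le> n \<Longrightarrow> x i \<in> S" using x_S0 by simp
lemma S_comm0: "\<forall>a\<in>S. \<forall>b\<in>S. a * b = b * a" using env unfolding LR_env_def by (elim conjE) assumption
lemma S_comm: "a \<in> S \<Longrightarrow> b \<in> S \<Longrightarrow> a * b = b * a" using S_comm0 by blast
lemma S_def: "S = {\<Sum>a\<in>A. c a * mpow x n a | A c. finite A \<and> A \<subseteq> idx n \<and> (\<forall>a\<in>A. c a \<in> K)}"
  using env unfolding LR_env_def by (elim conjE) assumption
lemma anchor0: "\<forall>i\<in>{1..n}. \<forall>s\<in>S. comm (\<alpha> i) s \<in> S" using env unfolding LR_env_def by (elim conjE) assumption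
lemma anchor: "1 \<le> i \<Longrightarrow> i \<le> n \<Longrightarrow> s \<in> S \<Longrightarrow> comm (\<alpha> i) s \<in> S"
  using anchor0 by simp
lemma bracket0: "\<forall>i\<in>{1..n}. \<forall>j\<in>{1..n}. \<exists>c. (\<forall>l. c l \<in> S) \<and> comm (\<alpha> i) (\<alpha> j) = (\<Sum>l=1..n. c l * \<alpha> l)"
  using env unfolding LR_env_def by (elim conjE) assumption
lemma bracket: "1 \<le> i \<Longrightarrow> i \<le> n \<Longrightarrow> 1 \<le> j \<Longrightarrow> j \<le> n \<Longrightarrow>
   \<exists>c. (\<forall>l. c l \<in> S) \<and> comm (\<alpha> i) (\<alpha> j) = (\<Sum>l=1..n. c l * \<alpha> l)"
  using bracket0 by simp

lemma S_mem: "finite A \<Longrightarrow> A \<subseteq> idx n \<Longrightarrow> (\<And>a. a \<in> A \<Longrightarrow> c a \<in> K) \<Longrightarrow> (\<Sum>a\<in>A. c a * mpow x n a) \<in> S"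
  by (subst S_def) blast

lemma S_0: "0 \<in> S" using S_mem[of "{}"] by simp

lemma S_1: "1 \<in> S"
proof -
  have "(\<Sum>a\<in>{\<lambda>_. 0}. 1 * mpow x n a) \<in> S" by (rule S_mem) (auto simp: idx_def K_1)
  then show ?thesis by (simp add: mpow_zero)
qed

lemma S_add: assumes "s \<in> S" "t \<in> S" shows "s + t \<in> S"
proof -
  obtain A c where A: "s = (\<Sum>a\<in>A. c a * mpow x n a)" "finite A" "A \<subseteq> idx n" "\<forall>a\<in>A. c a \<in> K"
    using assms(1) by (subst (asm) S_def) blast
  obtain B d where B: "t = (\<Sum>a\<in>B. d a * mpow x n a)" "finite B" "B \<subseteq> idx n" "\<forall>a\<in>B. d a \<in> K"
    using assms(2) by (subst (asm) S_def) blast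
  let ?e = "\<lambda>a. (if a \<in> A then c a else 0) + (if a \<in> B then d a else 0)"
  have "(\<Sum>a\<in>A \<union> B. ?e a * mpow x n a) =
     (\<Sum>a\<in>A \<union> B. (if a \<in> A then c a * mpow x n a else 0)) + (\<Sum>a\<in>A \<union> B. (if a \<in> B then d a * mpow x n a else 0))"
    by (simp add: distrib_right sum.distrib) (intro arg_cong2[where f="(+)"] sum.cong; simp)
  also have "\<dots> = s + t"
  proof -
    have f: "finite (A \<union> B)" using A B by simp
    have i1: "(A \<union> B) \<inter> A = A" and i2: "(A \<union> B) \<inter> B = B" by auto
    have e1: "(\<Sum>a\<in>A \<union> B. if a \<in> A then c a * mpow x n a else 0) = (\<Sum>a\<in>A. c a * mpow x n a)"
      using sum.inter_restrict[OF f, of "\<lambda>a. c a * mpow x n a" A] i1 by simp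
    have e2: "(\<Sum>a\<in>A \<union> B. if a \<in> B then d a * mpow x n a else 0) = (\<Sum>a\<in>B. d a * mpow x n a)"
      using sum.inter_restrict[OF f, of "\<lambda>a. d a * mpow x n a" B] i2 by simp
    show ?thesis using A(1) B(1) e1 e2 by simp
  qed
  finally have e: "(\<Sum>a\<in>A \<union> B. ?e a * mpow x n a) = s + t" .
  have "(\<Sum>a\<in>A \<union> B. ?e a * mpow x n a) \<in> S"
    proof (rule S_mem)
    show "\<And>a. a \<in> A \<union> B \<Longrightarrow> ?e a \<in> K" using A(4) B(4) K_0 by (auto intro!: K_add)
  qed (use A B in auto)
  then show ?thesis using e by simp
qed

lemma S_neg: assumes "s \<in> S" shows "- s \<in> S"
proof -
  obtain A c where A: "s = (\<Sum>a\<in>A. c a * mpow x n a)" "finite A" "A \<subseteq> idx n" "\<forall>a\<in>A. c a \<in> K"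
    using assms(1) by (subst (asm) S_def) blast
  have "(\<Sum>a\<in>A. (- c a) * mpow x n a) \<in> S" using A by (intro S_mem) (auto intro: K_neg)
  then show ?thesis using A by (simp add: sum_negf)
qed

lemma S_diff: "s \<in> S \<Longrightarrow> t \<in> S \<Longrightarrow> s - t \<in> S"
proof -
  assume "s \<in> S" "t \<in> S"
  then have "s + - t \<in> S" by (intro S_add S_neg)
  then show ?thesis by simp
qed

lemma S_sum: "finite A \<Longrightarrow> (\<And>a. a \<in> A \<Longrightarrow> g a \<in> S) \<Longrightarrow> sum g A \<in> S"
  by (induction A rule: finite_induct) (auto simp: S_0 S_add)

lemma mpow_x_add: "mpow x n a * mpow x n b = mpow x n (\<lambda>i. a i + b i)"
  unfolding mpow_def
proof (rule oprod_pow_add)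
  fix i j assume "1 \<le> i" "i \<le> n" "1 \<le> j" "j \<le> n"
  then show "x i * x j = x j * x i" by (intro S_comm x_S)
qed

lemma S_mono: assumes "s \<in> S" "k \<in> K" "b \<in> idx n" shows "s * (k * mpow x n b) \<in> S"
proof -
  obtain A c where A: "s = (\<Sum>a\<in>A. c a * mpow x n a)" "finite A" "A \<subseteq> idx n" "\<forall>a\<in>A. c a \<in> K"
    using assms(1) by (subst (asm) S_def) blast
  have "s * (k * mpow x n b) = (\<Sum>a\<in>A. (c a * k) * mpow x n (\<lambda>i. a i + b i))"
  proof -
    have "s * (k * mpow x n b) = (\<Sum>a\<in>A. c a * (mpow x n a * k) * mpow x n b)"
      by (simp add: A sum_distrib_right mult.assoc)
    also have "\<dots> = (\<Sum>a\<in>A. (c a * k) * mpow x n (\<lambda>i. a i + b i))"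
    proof (intro sum.cong refl)
    fix a assume "a \<in> A"
    have "c a * (mpow x n a * k) * mpow x n b = c a * (k * mpow x n a) * mpow x n b"
      using K_central[OF assms(2), of "mpow x n a"] by simp
    also have "\<dots> = (c a * k) * (mpow x n a * mpow x n b)" by (simp only: mult.assoc)
    finally show "c a * (mpow x n a * k) * mpow x n b = (c a * k) * mpow x n (\<lambda>i. a i + b i)"
      by (simp only: mpow_x_add)
  qed
    finally show ?thesis .
  qed
  also have "\<dots> = (\<Sum>a'\<in>(\<lambda>a i. a i + b i) ` A. (c (\<lambda>i. a' i - b i) * k) * mpow x n a')"
  proof -
    have inj: "inj_on (\<lambda>a i. a i + b i) A" by (rule inj_onI) (simp add: fun_eq_iff)
    show ?thesis by (simp add: sum.reindex[OF inj])
  qed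
  also have "\<dots> \<in> S"
  proof (rule S_mem)
    show "(\<lambda>a i. a i + b i) ` A \<subseteq> idx n" using A(3) assms(3) by (auto simp: idx_def)
    show "\<And>a. a \<in> (\<lambda>a i. a i + b i) ` A \<Longrightarrow> c (\<lambda>i. a i - b i) * k \<in> K" using A(4) assms(2) by (auto intro: K_mult)
  qed (use A in auto)
  finally show ?thesis .
qed

lemma S_mult: assumes "s \<in> S" "t \<in> S" shows "s * t \<in> S"
proof -
  obtain B d where B: "t = (\<Sum>a\<in>B. d a * mpow x n a)" "finite B" "B \<subseteq> idx n" "\<forall>a\<in>B. d a \<in> K"
    using assms(2) by (subst (asm) S_def) blast
  have "s * t = (\<Sum>a\<in>B. s * (d a * mpow x n a))" by (simp add: B sum_distrib_left)
  also have "\<dots> \<in> S" using B by (intro S_sum S_mono assms(1)) auto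
  finally show ?thesis .
qed

lemma S_of_nat: "of_nat m \<in> S"
  by (induction m) (auto simp: S_0 S_1 S_add)

end


definition decI :: "(nat \<Rightarrow> nat) \<Rightarrow> nat \<Rightarrow> (nat \<Rightarrow> nat)" where
  "decI J m = J(m := J m - 1)"

lemma idx_zero: assumes a: "J \<in> idx n" and b: "l = 0 \<or> n < l" shows "J l = 0"
proof -
  from a have "\<forall>i. (i = 0 \<or> n < i) \<longrightarrow> J i = 0" by (simp add: idx_def)
  then have "(l = 0 \<or> n < l) \<longrightarrow> J l = 0" by (rule spec)
  then show ?thesis using b by (rule mp)
qed

lemma absI_incI: "1 \<le> i \<Longrightarrow> i \<le> n \<Longrightarrow> absI n (incI J i) = absI n J + 1"
proof -
  assume i: "1 \<le> i" "i \<le> n"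
  have "absI n (incI J i) = (\<Sum>l=1..n. J l + (if l = i then 1 else 0))"
    unfolding absI_def incI_def by (intro sum.cong refl) auto
  also have "\<dots> = absI n J + 1" using i by (simp add: sum.distrib absI_def)
  finally show ?thesis .
qed

lemma incI_decI: "0 < J m \<Longrightarrow> incI (decI J m) m = J"
  by (auto simp: incI_def decI_def fun_eq_iff)

lemma decI_incI: "decI (incI J m) m = J"
  by (auto simp: incI_def decI_def fun_eq_iff)

lemma incI_idx: "J \<in> idx n \<Longrightarrow> 1 \<le> i \<Longrightarrow> i \<le> n \<Longrightarrow> incI J i \<in> idx n"
  by (auto simp: idx_def incI_def)

lemma decI_idx: "J \<in> idx n \<Longrightarrow> decI J i \<in> idx n"
  by (auto simp: idx_def decI_def)

lemma absI_decI: "0 < J m \<Longrightarrow> 1 \<le> m \<Longrightarrow> m \<le> n \<Longrightarrow> absI n (decI J m) + 1 = absI n J"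
  using absI_incI[of m n "decI J m"] incI_decI[of J m] by simp

lemma incI_comm: "incI (incI J i) m = incI (incI J m) i"
  by (auto simp: incI_def fun_eq_iff)

lemma absI_zero: assumes "J \<in> idx n" "absI n J = 0" shows "J = (\<lambda>_. 0)"
proof
  fix l
  show "J l = 0"
  proof (cases "1 \<le> l \<and> l \<le> n")
    case True
    have "J l \<le> absI n J" unfolding absI_def using True by (intro member_le_sum) auto
    then show ?thesis using assms(2) by simp
  next
    case False
    then have "l = 0 \<or> n < l" by auto
    then show ?thesis using assms(1) by (intro idx_zero)
  qed
qed

lemma top_exists:
  assumes "J \<in> idx n" "0 < absI n J"
  obtains m where "1 \<le> m" "m \<le> n" "0 < J m" "\<And>l. m < l \<Longrightarrow> J l = 0"
proof -
  let ?M = "{i\<in>{1..n}. 0 < J i}"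
  have ne: "?M \<noteq> {}"
  proof
    assume "?M = {}"
    then have "\<forall>l\<in>{1..n}. J l = 0" by auto
    then have "absI n J = 0" unfolding absI_def by simp
    with assms show False by simp
  qed
  have fin: "finite ?M" by simp
  let ?m = "Max ?M"
  have mM: "?m \<in> ?M" using Max_in[OF fin ne] .
  show ?thesis
  proof (rule that)
    show "1 \<le> ?m" "?m \<le> n" "0 < J ?m" using mM by auto
    fix l assume l: "?m < l"
    show "J l = 0"
    proof (rule ccontr)
      assume nz: "J l \<noteq> 0"
      have "l \<le> n"
      proof (rule ccontr)
        assume "\<not> l \<le> n" then have "n < l" by simp
        then show False using nz idx_zero[OF assms(1), of l] by simp
      qed
      moreover have "1 \<le> l" using l mM by simp
      ultimately have "l \<in> {1..n}" by simp
      then have "l \<in> ?M" using nz by simp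
      then have "l \<le> ?m" by (rule Max_ge[OF fin])
      with l show False by simp
    qed
  qed
qed

context lr
begin

abbreviation F where "F q \<equiv> Fil S \<alpha> n q"

lemma Fil_I: "(\<And>I. f I \<in> S) \<Longrightarrow> (\<Sum>I\<in>{I \<in> idx n. int (absI n I) \<le> q}. f I * mpow \<alpha> n I) \<in> F q"
  unfolding Fil_def by blast

lemma Fil_ex: "u \<in> F q \<Longrightarrow> \<exists>f. (\<forall>I. f I \<in> S) \<and> u = (\<Sum>I\<in>{I \<in> idx n. int (absI n I) \<le> q}. f I * mpow \<alpha> n I)"
  unfolding Fil_def by simp

lemma Fil_0: "0 \<in> F q"
  using Fil_I[of "\<lambda>_. 0" q] S_0 by simp

lemma Fil_add: assumes "u \<in> F q" "v \<in> F q" shows "u + v \<in> F q"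
proof -
  obtain f where f: "\<And>I. f I \<in> S" "u = (\<Sum>I\<in>{I \<in> idx n. int (absI n I) \<le> q}. f I * mpow \<alpha> n I)"
    using Fil_ex[OF assms(1)] by auto
  obtain g where g: "\<And>I. g I \<in> S" "v = (\<Sum>I\<in>{I \<in> idx n. int (absI n I) \<le> q}. g I * mpow \<alpha> n I)"
    using Fil_ex[OF assms(2)] by auto
  have "(\<Sum>I\<in>{I \<in> idx n. int (absI n I) \<le> q}. (f I + g I) * mpow \<alpha> n I) \<in> F q"
    by (rule Fil_I) (simp add: S_add f g)
  then show ?thesis by (simp add: f g distrib_right sum.distrib)
qed

lemma Fil_neg: assumes "u \<in> F q" shows "- u \<in> F q"
proof -
  obtain f where f: "\<And>I. f I \<in> S" "u = (\<Sum>I\<in>{I \<in> idx n. int (absI n I) \<le> q}. f I * mpow \<alpha> n I)"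
    using Fil_ex[OF assms(1)] by auto
  have "(\<Sum>I\<in>{I \<in> idx n. int (absI n I) \<le> q}. (- f I) * mpow \<alpha> n I) \<in> F q"
    by (rule Fil_I) (simp add: S_neg f)
  then show ?thesis by (simp add: f sum_negf)
qed

lemma Fil_diff: "u \<in> F q \<Longrightarrow> v \<in> F q \<Longrightarrow> u - v \<in> F q"
proof -
  assume "u \<in> F q" "v \<in> F q"
  then have "u + - v \<in> F q" by (intro Fil_add Fil_neg)
  then show ?thesis by simp
qed

lemma Fil_sum: "finite A \<Longrightarrow> (\<And>a. a \<in> A \<Longrightarrow> g a \<in> F q) \<Longrightarrow> sum g A \<in> F q"
  by (induction A rule: finite_induct) (auto simp: Fil_0 Fil_add)

lemma Fil_smult: assumes "s \<in> S" "u \<in> F q" shows "s * u \<in> F q"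
proof -
  obtain f where f: "\<And>I. f I \<in> S" "u = (\<Sum>I\<in>{I \<in> idx n. int (absI n I) \<le> q}. f I * mpow \<alpha> n I)"
    using Fil_ex[OF assms(2)] by auto
  have "(\<Sum>I\<in>{I \<in> idx n. int (absI n I) \<le> q}. (s * f I) * mpow \<alpha> n I) \<in> F q"
    by (rule Fil_I) (simp add: S_mult f assms(1))
  then show ?thesis by (simp add: f sum_distrib_left mult.assoc)
qed

lemma Fil_mono: assumes "u \<in> F q" "q \<le> q'" shows "u \<in> F q'"
proof -
  obtain f where f: "\<And>I. f I \<in> S" "u = (\<Sum>I\<in>{I \<in> idx n. int (absI n I) \<le> q}. f I * mpow \<alpha> n I)"
    using Fil_ex[OF assms(1)] by auto
  let ?D = "{I \<in> idx n. int (absI n I) \<le> q}"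
  let ?D' = "{I \<in> idx n. int (absI n I) \<le> q'}"
  have "(\<Sum>I\<in>?D'. (if I \<in> ?D then f I else 0) * mpow \<alpha> n I) \<in> F q'"
    by (rule Fil_I) (simp add: f S_0)
  moreover have "(\<Sum>I\<in>?D'. (if I \<in> ?D then f I else 0) * mpow \<alpha> n I) = (\<Sum>I\<in>?D'. (if I \<in> ?D then f I * mpow \<alpha> n I else 0))"
    by (intro sum.cong refl) simp
  moreover have "\<dots> = (\<Sum>I\<in>?D' \<inter> ?D. f I * mpow \<alpha> n I)"
    using sum.inter_restrict[OF finite_Fil_set[of n q'], of "\<lambda>I. f I * mpow \<alpha> n I" ?D] by simp
  moreover have "?D' \<inter> ?D = ?D" using assms(2) by auto
  ultimately show ?thesis using f by simp
qed

lemma Fil_mpow: assumes "I \<in> idx n" "int (absI n I) \<le> q" shows "mpow \<alpha> n I \<in> F q"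
proof -
  let ?D = "{I \<in> idx n. int (absI n I) \<le> q}"
  have "(\<Sum>J\<in>?D. (if I = J then 1 else 0) * mpow \<alpha> n J) \<in> F q"
    by (rule Fil_I) (simp add: S_0 S_1)
  moreover have "(\<Sum>J\<in>?D. (if I = J then 1 else 0) * mpow \<alpha> n J) = (\<Sum>J\<in>?D. (if I = J then mpow \<alpha> n J else 0))"
    by (intro sum.cong refl) simp
  moreover have "\<dots> = mpow \<alpha> n I" using assms finite_Fil_set[of n q] by simp
  ultimately show ?thesis by simp
qed

lemma Fil_S: assumes "s \<in> S" "0 \<le> q" shows "s \<in> F q"
proof -
  have "mpow \<alpha> n (\<lambda>_. 0) \<in> F q" by (rule Fil_mpow) (auto simp: idx_def absI_def assms)
  then have "1 \<in> F q" by (simp add: mpow_zero)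
  then have "s * 1 \<in> F q" by (rule Fil_smult[OF assms(1)])
  then show ?thesis by simp
qed

lemma W_from:
  assumes H: "\<And>J i. J \<in> idx n \<Longrightarrow> int (absI n J) \<le> q \<Longrightarrow> 1 \<le> i \<Longrightarrow> i \<le> n \<Longrightarrow>
                 \<alpha> i * mpow \<alpha> n J \<in> F (int (absI n J) + 1)"
    and v: "v \<in> F q" and i: "1 \<le> i" "i \<le> n"
  shows "\<alpha> i * v \<in> F (q + 1)"
proof -
  obtain f where f: "\<And>I. f I \<in> S" "v = (\<Sum>I\<in>{I \<in> idx n. int (absI n I) \<le> q}. f I * mpow \<alpha> n I)"
    using Fil_ex[OF v] by auto
  have "\<alpha> i * v = (\<Sum>I\<in>{I \<in> idx n. int (absI n I) \<le> q}. \<alpha> i * f I * mpow \<alpha> n I)"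
    by (simp add: f sum_distrib_left mult.assoc)
  also have "\<dots> = (\<Sum>I\<in>{I \<in> idx n. int (absI n I) \<le> q}. f I * (\<alpha> i * mpow \<alpha> n I) + comm (\<alpha> i) (f I) * mpow \<alpha> n I)"
    by (intro sum.cong refl) (simp add: comm_def algebra_simps)
  also have "\<dots> \<in> F (q + 1)"
  proof (rule Fil_sum[OF finite_Fil_set])
    fix I assume I: "I \<in> {I \<in> idx n. int (absI n I) \<le> q}"
    show "f I * (\<alpha> i * mpow \<alpha> n I) + comm (\<alpha> i) (f I) * mpow \<alpha> n I \<in> F (q + 1)"
    proof (rule Fil_add)
      show "f I * (\<alpha> i * mpow \<alpha> n I) \<in> F (q + 1)"
        using I by (intro Fil_smult f Fil_mono[OF H[OF _ _ i]]) auto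
      show "comm (\<alpha> i) (f I) * mpow \<alpha> n I \<in> F (q + 1)"
        using I by (intro Fil_smult anchor i f Fil_mpow) auto
    qed
  qed
  finally show ?thesis .
qed

lemma lead_to_mem:
  assumes "\<alpha> i * mpow \<alpha> n J - mpow \<alpha> n (incI J i) \<in> F (int (absI n J))" "J \<in> idx n" "1 \<le> i" "i \<le> n"
  shows "\<alpha> i * mpow \<alpha> n J \<in> F (int (absI n J) + 1)"
proof -
  have "(\<alpha> i * mpow \<alpha> n J - mpow \<alpha> n (incI J i)) + mpow \<alpha> n (incI J i) \<in> F (int (absI n J) + 1)"
    using assms by (intro Fil_add Fil_mono[OF assms(1)] Fil_mpow incI_idx) (auto simp: absI_incI)
  then show ?thesis by simp
qed

end


context lr
begin

lemma PBW:
  assumes "J \<in> idx n" "1 \<le> i" "i \<le> n"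
  shows "\<alpha> i * mpow \<alpha> n J - mpow \<alpha> n (incI J i) \<in> F (int (absI n J))"
  using assms
proof (induction "absI n J" arbitrary: J i rule: less_induct)
  case less
  have H: "\<alpha> i' * mpow \<alpha> n J' \<in> F (int (absI n J') + 1)"
    if "J' \<in> idx n" "int (absI n J') \<le> int (absI n J) - 1" "1 \<le> i'" "i' \<le> n" for J' i'
  proof (rule lead_to_mem[OF _ that(1) that(3) that(4)])
    have "absI n J' < absI n J" using that(2) by simp
    then show "\<alpha> i' * mpow \<alpha> n J' - mpow \<alpha> n (incI J' i') \<in> F (int (absI n J'))"
      using that by (intro less.hyps)
  qed
  show ?case
  proof (cases "\<forall>l. i < l \<longrightarrow> l \<le> n \<longrightarrow> J l = 0")
    case True
    then have "mpow \<alpha> n (incI J i) = \<alpha> i * mpow \<alpha> n J"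
      using less.prems by (intro mpow_incI_top) auto
    then show ?thesis by (simp add: Fil_0)
  next
    case False
    then obtain l0 where l0: "i < l0" "l0 \<le> n" "J l0 \<noteq> 0" by auto
    have "J l0 \<le> absI n J" unfolding absI_def using l0 less.prems by (intro member_le_sum) auto
    then have pos: "0 < absI n J" using l0 by simp
    obtain m where m: "1 \<le> m" "m \<le> n" "0 < J m" "\<And>l. m < l \<Longrightarrow> J l = 0"
      using top_exists[OF less.prems(1) pos] by metis
    have im: "i < m"
    proof (rule ccontr)
      assume "\<not> i < m"
      then have "m < l0" using l0 by simp
      then have "J l0 = 0" by (rule m(4))
      with l0 show False by simp
    qed
    define J' where "J' = decI J m"
    have J'idx: "J' \<in> idx n" unfolding J'_def by (rule decI_idx[OF less.prems(1)])
    have JJ': "incI J' m = J" unfolding J'_def using m(3) by (rule incI_decI)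
    have deg: "absI n J' + 1 = absI n J" unfolding J'_def using m(3) m(1) m(2) by (rule absI_decI)
    have J'top: "J' l = 0" if "m < l" "l \<le> n" for l
      using m(4)[OF that(1)] that(1) by (simp add: J'_def decI_def)
    have mp: "mpow \<alpha> n J = \<alpha> m * mpow \<alpha> n J'"
    proof -
      have "mpow \<alpha> n (incI J' m) = \<alpha> m * mpow \<alpha> n J'"
        by (rule mpow_incI_top[OF m(1) m(2)]) (rule J'top)
      then show ?thesis using JJ' by simp
    qed
    obtain c where c: "\<And>l. c l \<in> S" "comm (\<alpha> m) (\<alpha> i) = (\<Sum>l=1..n. c l * \<alpha> l)"
      using bracket[OF m(1) m(2) less.prems(2,3)] by auto
    define r where "r = \<alpha> i * mpow \<alpha> n J' - mpow \<alpha> n (incI J' i)"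
    have r: "r \<in> F (int (absI n J'))"
    proof -
      have "absI n J' < absI n J" using deg by simp
      then show ?thesis unfolding r_def using J'idx less.prems by (intro less.hyps)
    qed
    have top2: "mpow \<alpha> n (incI J i) = \<alpha> m * mpow \<alpha> n (incI J' i)"
    proof -
      have "incI J i = incI (incI J' i) m" using JJ' incI_comm[of J' i m] by simp
      moreover have "mpow \<alpha> n (incI (incI J' i) m) = \<alpha> m * mpow \<alpha> n (incI J' i)"
      proof (rule mpow_incI_top[OF m(1) m(2)])
        fix l assume "m < l" "l \<le> n"
        then show "incI J' i l = 0" using J'top im by (simp add: incI_def)
      qed
      ultimately show ?thesis by simp
    qed
    have ai: "\<alpha> i * \<alpha> m = \<alpha> m * \<alpha> i - (\<Sum>l=1..n. c l * \<alpha> l)"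
    proof -
      have "\<alpha> i * \<alpha> m = \<alpha> m * \<alpha> i - comm (\<alpha> m) (\<alpha> i)" by (simp add: comm_def)
      then show ?thesis by (simp only: c(2))
    qed
    have eq: "\<alpha> i * mpow \<alpha> n J - mpow \<alpha> n (incI J i) = \<alpha> m * r - (\<Sum>l=1..n. c l * (\<alpha> l * mpow \<alpha> n J'))"
    proof -
      have "\<alpha> i * mpow \<alpha> n J = (\<alpha> i * \<alpha> m) * mpow \<alpha> n J'" by (simp add: mp mult.assoc)
      also have "\<dots> = (\<alpha> m * \<alpha> i) * mpow \<alpha> n J' - (\<Sum>l=1..n. c l * \<alpha> l) * mpow \<alpha> n J'"
        by (simp only: ai left_diff_distrib)
      also have "\<dots> = \<alpha> m * (\<alpha> i * mpow \<alpha> n J') - (\<Sum>l=1..n. c l * (\<alpha> l * mpow \<alpha> n J'))"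
        by (simp only: mult.assoc sum_distrib_right)
      also have "\<alpha> i * mpow \<alpha> n J' = r + mpow \<alpha> n (incI J' i)" by (simp add: r_def)
      finally show ?thesis by (simp add: top2 distrib_left)
    qed
    have "\<alpha> m * r \<in> F (int (absI n J') + 1)"
      by (rule W_from[OF _ r m(1) m(2)]) (rule H; use deg in auto)
    moreover have "(\<Sum>l=1..n. c l * (\<alpha> l * mpow \<alpha> n J')) \<in> F (int (absI n J') + 1)"
      by (intro Fil_sum Fil_smult c H J'idx) (use deg in auto)
    ultimately have "\<alpha> m * r - (\<Sum>l=1..n. c l * (\<alpha> l * mpow \<alpha> n J')) \<in> F (int (absI n J))"
    proof -
      have dg: "int (absI n J) = int (absI n J') + 1" by (simp flip: deg)
      show ?thesis unfolding dg by (rule Fil_diff) (fact+)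
    qed
    then show ?thesis using eq by simp
  qed
qed

lemma alpha_mpow: "J \<in> idx n \<Longrightarrow> 1 \<le> i \<Longrightarrow> i \<le> n \<Longrightarrow> \<alpha> i * mpow \<alpha> n J \<in> F (int (absI n J) + 1)"
  by (intro lead_to_mem PBW)

lemma alpha_Fil: "v \<in> F q \<Longrightarrow> 1 \<le> i \<Longrightarrow> i \<le> n \<Longrightarrow> \<alpha> i * v \<in> F (q + 1)"
  by (rule W_from[OF alpha_mpow])

end


lemma incI_decI_comm: "0 < J m' \<Longrightarrow> incI (decI J m') m = decI (incI J m) m'"
  by (auto simp: fun_eq_iff incI_def decI_def)

context lr
begin

lemma comm_mult_left: "comm (a * w) s = a * comm w s + comm a s * w"
  by (simp add: comm_def algebra_simps)

lemma comm_S_left: "g \<in> S \<Longrightarrow> s \<in> S \<Longrightarrow> comm (g * w) s = g * comm w s"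
proof -
  assume "g \<in> S" "s \<in> S"
  then have "s * g = g * s" by (rule S_comm[symmetric])
  then have "s * g * w = g * s * w" by simp
  then show ?thesis by (simp add: comm_def right_diff_distrib mult.assoc)
qed

lemma comm_sum: "comm (sum g A) s = (\<Sum>a\<in>A. comm (g a) s)"
  by (simp add: comm_def sum_distrib_left sum_distrib_right sum_subtractf)

lemma commD:
  assumes "I \<in> idx n" "s \<in> S"
  shows "comm (mpow \<alpha> n I) s - (\<Sum>m=1..n. of_nat (I m) * comm (\<alpha> m) s * mpow \<alpha> n (decI I m))
           \<in> F (int (absI n I) - 2)"
  using assms
proof (induction "absI n I" arbitrary: I rule: less_induct)
  case less
  show ?case
  proof (cases "absI n I = 0")
    case True
    then have I0: "I = (\<lambda>_. 0)" using absI_zero less.prems(1) by blast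
    have "comm (mpow \<alpha> n I) s = 0" by (simp add: I0 mpow_zero comm_def)
    moreover have "(\<Sum>m=1..n. of_nat (I m) * comm (\<alpha> m) s * mpow \<alpha> n (decI I m)) = 0"
      by (simp add: I0)
    ultimately show ?thesis by (simp add: Fil_0)
  next
    case False
    then have pos: "0 < absI n I" by simp
    obtain m where m: "1 \<le> m" "m \<le> n" "0 < I m" "\<And>l. m < l \<Longrightarrow> I l = 0"
      using top_exists[OF less.prems(1) pos] by metis
    define I' where "I' = decI I m"
    have I'idx: "I' \<in> idx n" unfolding I'_def by (rule decI_idx[OF less.prems(1)])
    have II': "incI I' m = I" unfolding I'_def using m(3) by (rule incI_decI)
    have deg: "absI n I' + 1 = absI n I" unfolding I'_def using m(3) m(1) m(2) by (rule absI_decI)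
    have I'top: "I' l = 0" if "m < l" "l \<le> n" for l
      using m(4)[OF that(1)] that(1) by (simp add: I'_def decI_def)
    have mp: "mpow \<alpha> n I = \<alpha> m * mpow \<alpha> n I'"
    proof -
      have "mpow \<alpha> n (incI I' m) = \<alpha> m * mpow \<alpha> n I'"
        by (rule mpow_incI_top[OF m(1) m(2)]) (rule I'top)
      then show ?thesis using II' by simp
    qed
    define c where "c = (\<lambda>m'. comm (\<alpha> m') s)"
    have cS: "c m' \<in> S" if "1 \<le> m'" "m' \<le> n" for m'
      unfolding c_def using that less.prems(2) by (rule anchor)
    define r where "r = comm (mpow \<alpha> n I') s - (\<Sum>m'=1..n. of_nat (I' m') * c m' * mpow \<alpha> n (decI I' m'))"
    have r: "r \<in> F (int (absI n I') - 2)"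
    proof -
      have "absI n I' < absI n I" using deg by simp
      then show ?thesis unfolding r_def c_def using I'idx less.prems(2) by (intro less.hyps)
    qed
    have trm: "\<alpha> m * (of_nat (I' m') * c m' * mpow \<alpha> n (decI I' m'))
        = of_nat (I' m') * c m' * mpow \<alpha> n (decI I m') + of_nat (I' m') * comm (\<alpha> m) (c m') * mpow \<alpha> n (decI I' m')"
      for m'
    proof (cases "I' m' = 0")
      case True then show ?thesis by simp
    next
      case False
      have top': "\<alpha> m * mpow \<alpha> n (decI I' m') = mpow \<alpha> n (decI I m')"
      proof -
        have "mpow \<alpha> n (incI (decI I' m') m) = \<alpha> m * mpow \<alpha> n (decI I' m')"
        proof (rule mpow_incI_top[OF m(1) m(2)])
          fix l assume "m < l" "l \<le> n"
          then show "decI I' m' l = 0" using I'top by (simp add: decI_def)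
        qed
        moreover have "incI (decI I' m') m = decI I m'"
          using False II' incI_decI_comm[of I' m' m] by simp
        ultimately show ?thesis by simp
      qed
      have "\<alpha> m * (of_nat (I' m') * c m' * mpow \<alpha> n (decI I' m'))
          = of_nat (I' m') * ((\<alpha> m * c m') * mpow \<alpha> n (decI I' m'))"
        by (simp add: mult.assoc mult_of_nat_commute flip: mult.assoc[of "\<alpha> m" "of_nat (I' m')"])
      also have "\<alpha> m * c m' = c m' * \<alpha> m + comm (\<alpha> m) (c m')" by (simp add: comm_def)
      finally show ?thesis
        by (simp add: distrib_right distrib_left mult.assoc top')
    qed
    have key: "comm (mpow \<alpha> n I) s = \<alpha> m * r
        + (\<Sum>m'=1..n. of_nat (I' m') * c m' * mpow \<alpha> n (decI I m'))
        + (\<Sum>m'=1..n. of_nat (I' m') * comm (\<alpha> m) (c m') * mpow \<alpha> n (decI I' m'))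
        + c m * mpow \<alpha> n I'"
    proof -
      have "comm (mpow \<alpha> n I) s = \<alpha> m * comm (mpow \<alpha> n I') s + c m * mpow \<alpha> n I'"
        unfolding mp c_def by (rule comm_mult_left)
      also have "comm (mpow \<alpha> n I') s = r + (\<Sum>m'=1..n. of_nat (I' m') * c m' * mpow \<alpha> n (decI I' m'))"
        by (simp add: r_def)
      finally show ?thesis
        by (simp add: distrib_left sum_distrib_left trm sum.distrib)
    qed
    have tgt: "(\<Sum>m'=1..n. of_nat (I m') * c m' * mpow \<alpha> n (decI I m'))
        = (\<Sum>m'=1..n. of_nat (I' m') * c m' * mpow \<alpha> n (decI I m')) + c m * mpow \<alpha> n I'"
    proof -
      have "(\<Sum>m'=1..n. of_nat (I m') * c m' * mpow \<alpha> n (decI I m'))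
          = (\<Sum>m'=1..n. of_nat (I' m') * c m' * mpow \<alpha> n (decI I m') + (if m' = m then c m' * mpow \<alpha> n (decI I m') else 0))"
      proof (intro sum.cong refl)
        fix m' assume "m' \<in> {1..n}"
        have "I m' = I' m' + (if m' = m then 1 else 0)"
          using II'[symmetric] by (auto simp: incI_def)
        then show "of_nat (I m') * c m' * mpow \<alpha> n (decI I m') = of_nat (I' m') * c m' * mpow \<alpha> n (decI I m') + (if m' = m then c m' * mpow \<alpha> n (decI I m') else 0)"
          by (simp add: distrib_right)
      qed
      also have "\<dots> = (\<Sum>m'=1..n. of_nat (I' m') * c m' * mpow \<alpha> n (decI I m')) + c m * mpow \<alpha> n (decI I m)"
        using m(1,2) by (simp add: sum.distrib)
      also have "decI I m = I'" by (simp add: I'_def)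
      finally show ?thesis .
    qed
    have diff: "comm (mpow \<alpha> n I) s - (\<Sum>m'=1..n. of_nat (I m') * c m' * mpow \<alpha> n (decI I m'))
        = \<alpha> m * r + (\<Sum>m'=1..n. of_nat (I' m') * comm (\<alpha> m) (c m') * mpow \<alpha> n (decI I' m'))"
      unfolding key tgt by (simp add: algebra_simps)
    have dg: "int (absI n I) - 2 = (int (absI n I') - 2) + 1" using deg by (simp flip: deg)
    have "\<alpha> m * r + (\<Sum>m'=1..n. of_nat (I' m') * comm (\<alpha> m) (c m') * mpow \<alpha> n (decI I' m')) \<in> F (int (absI n I) - 2)"
    proof (rule Fil_add)
      show "\<alpha> m * r \<in> F (int (absI n I) - 2)" unfolding dg using r m(1,2) by (rule alpha_Fil)
      show "(\<Sum>m'=1..n. of_nat (I' m') * comm (\<alpha> m) (c m') * mpow \<alpha> n (decI I' m')) \<in> F (int (absI n I) - 2)"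
      proof (rule Fil_sum)
        fix m' assume m': "m' \<in> {1..n}"
        show "of_nat (I' m') * comm (\<alpha> m) (c m') * mpow \<alpha> n (decI I' m') \<in> F (int (absI n I) - 2)"
        proof (cases "I' m' = 0")
          case True then show ?thesis by (simp add: Fil_0)
        next
          case False
          have d2: "absI n (decI I' m') + 1 = absI n I'" using False m' by (intro absI_decI) auto
          have "mpow \<alpha> n (decI I' m') \<in> F (int (absI n I) - 2)"
            using d2 deg by (intro Fil_mpow decI_idx I'idx) linarith
          then show ?thesis using m' m(1,2) cS
            by (simp add: mult.assoc Fil_smult S_mult S_of_nat anchor)
        qed
      qed simp
    qed
    then show ?thesis using diff by (simp add: c_def)
  qed
qed

end


context lr
begin

lemma commT_mem:
  assumes "I \<in> idx n" "s \<in> S" "int (absI n I) - 1 \<le> q"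
  shows "(\<Sum>m=1..n. of_nat (I m) * comm (\<alpha> m) s * mpow \<alpha> n (decI I m)) \<in> F q"
proof (rule Fil_sum)
  fix m assume m: "m \<in> {1..n}"
  show "of_nat (I m) * comm (\<alpha> m) s * mpow \<alpha> n (decI I m) \<in> F q"
  proof (cases "I m = 0")
    case True then show ?thesis by (simp add: Fil_0)
  next
    case False
    have d2: "absI n (decI I m) + 1 = absI n I" using False m by (intro absI_decI) auto
    have "mpow \<alpha> n (decI I m) \<in> F q"
      using d2 assms(3) by (intro Fil_mpow decI_idx assms(1)) linarith
    then show ?thesis using m assms(2)
      by (simp add: mult.assoc Fil_smult S_mult S_of_nat anchor)
  qed
qed simp

lemma comm_mpow_mem:
  assumes "I \<in> idx n" "s \<in> S" "int (absI n I) - 1 \<le> q"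
  shows "comm (mpow \<alpha> n I) s \<in> F q"
proof -
  let ?T = "(\<Sum>m=1..n. of_nat (I m) * comm (\<alpha> m) s * mpow \<alpha> n (decI I m))"
  have "comm (mpow \<alpha> n I) s - ?T + ?T \<in> F q"
  proof (rule Fil_add)
    show "comm (mpow \<alpha> n I) s - ?T \<in> F q"
      using assms(3) by (intro Fil_mono[OF commD[OF assms(1,2)]]) simp
    show "?T \<in> F q" by (rule commT_mem[OF assms])
  qed
  then show ?thesis by simp
qed

lemma commF: assumes "v \<in> F q" "s \<in> S" shows "comm v s \<in> F (q - 1)"
proof -
  obtain f where f: "\<And>I. f I \<in> S" "v = (\<Sum>I\<in>{I \<in> idx n. int (absI n I) \<le> q}. f I * mpow \<alpha> n I)"
    using Fil_ex[OF assms(1)] by auto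
  have "comm v s = (\<Sum>I\<in>{I \<in> idx n. int (absI n I) \<le> q}. f I * comm (mpow \<alpha> n I) s)"
    unfolding f(2) comm_sum by (intro sum.cong refl comm_S_left f(1) assms(2))
  also have "\<dots> \<in> F (q - 1)"
    by (intro Fil_sum finite_Fil_set Fil_smult f(1) comm_mpow_mem assms(2)) auto
  finally show ?thesis .
qed

lemma Omega0_comm:
  assumes "\<And>i. 1 \<le> i \<Longrightarrow> i \<le> n \<Longrightarrow> g i \<in> S" "s \<in> S"
  shows "comm (Omega0 \<alpha> n g) s = (\<Sum>i=1..n. g i * comm (\<alpha> i) s)"
  unfolding Omega0_def comm_sum using assms by (intro sum.cong refl comm_S_left) auto

lemma reindex_m:
  assumes m: "1 \<le> m" "m \<le> n"
  shows "(\<Sum>I\<in>idx_deg n p. f I * (of_nat (I m) * C * mpow \<alpha> n (decI I m)))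
       = (\<Sum>J\<in>idx_deg n (p - 1). of_nat (J m + 1) * f (incI J m) * C * mpow \<alpha> n J)"
proof -
  let ?A = "{I \<in> idx_deg n p. 0 < I m}"
  have "(\<Sum>I\<in>idx_deg n p. f I * (of_nat (I m) * C * mpow \<alpha> n (decI I m)))
      = (\<Sum>I\<in>?A. f I * (of_nat (I m) * C * mpow \<alpha> n (decI I m)))"
    by (rule sum.mono_neutral_right[OF finite_idx_deg]) auto
  also have "\<dots> = (\<Sum>J\<in>idx_deg n (p - 1). of_nat (J m + 1) * f (incI J m) * C * mpow \<alpha> n J)"
  proof (rule sum.reindex_bij_witness[where i = "\<lambda>J. incI J m" and j = "\<lambda>I. decI I m"])
    fix I assume I: "I \<in> ?A"
    show "incI (decI I m) m = I" using I by (intro incI_decI) simp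
    have "absI n (decI I m) + 1 = absI n I" using I m by (intro absI_decI) auto
    then show "decI I m \<in> idx_deg n (p - 1)" using I by (auto simp: idx_deg_def decI_idx)
    have "of_nat (decI I m m + 1) = (of_nat (I m) :: 'u)" using I by (simp add: decI_def)
    then show "of_nat (decI I m m + 1) * f (incI (decI I m) m) * C * mpow \<alpha> n (decI I m)
        = f I * (of_nat (I m) * C * mpow \<alpha> n (decI I m))"
      using I by (simp add: incI_decI mult_of_nat_commute mult.assoc)
  next
    fix J assume J: "J \<in> idx_deg n (p - 1)"
    show "decI (incI J m) m = J" by (rule decI_incI)
    have "incI J m \<in> idx_deg n p" using J m by (auto simp: idx_deg_def incI_idx absI_incI)
    moreover have "0 < incI J m m" by (simp add: incI_def)
    ultimately show "incI J m \<in> ?A" by simp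
  qed
  finally show ?thesis .
qed

lemma core:
  assumes fS: "\<forall>I\<in>idx_deg n p. f I \<in> S"
    and hu: "u - (\<Sum>I\<in>idx_deg n p. f I * mpow \<alpha> n I) \<in> F (p - 1)"
    and s: "s \<in> S"
  shows "comm u s - (\<Sum>J\<in>idx_deg n (p - 1).
            comm (Omega0 \<alpha> n (\<lambda>i. of_nat (J i + 1) * f (incI J i))) s * mpow \<alpha> n J) \<in> F (p - 2)"
proof -
  let ?V = "\<Sum>I\<in>idx_deg n p. f I * mpow \<alpha> n I"
  let ?T = "\<lambda>I. (\<Sum>m=1..n. of_nat (I m) * comm (\<alpha> m) s * mpow \<alpha> n (decI I m))"
  have c1: "comm (u - ?V) s \<in> F (p - 2)" using commF[OF hu s] by simp
  have cV: "comm ?V s = (\<Sum>I\<in>idx_deg n p. f I * comm (mpow \<alpha> n I) s)"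
    unfolding comm_sum using fS s by (intro sum.cong refl comm_S_left) auto
  have c2: "(\<Sum>I\<in>idx_deg n p. f I * (comm (mpow \<alpha> n I) s - ?T I)) \<in> F (p - 2)"
  proof (intro Fil_sum finite_idx_deg Fil_smult)
    fix I assume I: "I \<in> idx_deg n p"
    show "f I \<in> S" using fS I by simp
    show "comm (mpow \<alpha> n I) s - ?T I \<in> F (p - 2)"
      using I commD[OF _ s, of I] by (simp add: idx_deg_def)
  qed
  have c3: "(\<Sum>I\<in>idx_deg n p. f I * ?T I)
     = (\<Sum>J\<in>idx_deg n (p - 1). comm (Omega0 \<alpha> n (\<lambda>i. of_nat (J i + 1) * f (incI J i))) s * mpow \<alpha> n J)"
  proof -
    have "(\<Sum>I\<in>idx_deg n p. f I * ?T I)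
        = (\<Sum>m=1..n. \<Sum>I\<in>idx_deg n p. f I * (of_nat (I m) * comm (\<alpha> m) s * mpow \<alpha> n (decI I m)))"
      by (simp add: sum_distrib_left sum.swap[of _ "idx_deg n p"])
    also have "\<dots> = (\<Sum>m=1..n. \<Sum>J\<in>idx_deg n (p - 1). of_nat (J m + 1) * f (incI J m) * comm (\<alpha> m) s * mpow \<alpha> n J)"
      by (intro sum.cong refl reindex_m) auto
    also have "\<dots> = (\<Sum>J\<in>idx_deg n (p - 1). \<Sum>m=1..n. of_nat (J m + 1) * f (incI J m) * comm (\<alpha> m) s * mpow \<alpha> n J)"
      by (rule sum.swap)
    also have "\<dots> = (\<Sum>J\<in>idx_deg n (p - 1). comm (Omega0 \<alpha> n (\<lambda>i. of_nat (J i + 1) * f (incI J i))) s * mpow \<alpha> n J)"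
    proof (intro sum.cong refl)
      fix J assume J: "J \<in> idx_deg n (p - 1)"
      have gS: "of_nat (J i + 1) * f (incI J i) \<in> S" if "1 \<le> i" "i \<le> n" for i
      proof -
        have "incI J i \<in> idx_deg n p" using J that by (auto simp: idx_deg_def incI_idx absI_incI)
        then show ?thesis using fS by (intro S_mult S_of_nat) auto
      qed
      show "(\<Sum>m=1..n. of_nat (J m + 1) * f (incI J m) * comm (\<alpha> m) s * mpow \<alpha> n J)
          = comm (Omega0 \<alpha> n (\<lambda>i. of_nat (J i + 1) * f (incI J i))) s * mpow \<alpha> n J"
        by (subst Omega0_comm[OF gS s]) (auto simp: sum_distrib_right)
    qed
    finally show ?thesis .
  qed
  have "comm u s = comm (u - ?V) s + comm ?V s" by (simp add: comm_def algebra_simps)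
  also have "comm ?V s = (\<Sum>I\<in>idx_deg n p. f I * (comm (mpow \<alpha> n I) s - ?T I)) + (\<Sum>I\<in>idx_deg n p. f I * ?T I)"
    unfolding cV by (simp add: sum.distrib[symmetric] right_diff_distrib)
  finally have "comm u s - (\<Sum>I\<in>idx_deg n p. f I * ?T I)
      = comm (u - ?V) s + (\<Sum>I\<in>idx_deg n p. f I * (comm (mpow \<alpha> n I) s - ?T I))" by simp
  moreover have "comm (u - ?V) s + (\<Sum>I\<in>idx_deg n p. f I * (comm (mpow \<alpha> n I) s - ?T I)) \<in> F (p - 2)"
    by (rule Fil_add[OF c1 c2])
  ultimately show ?thesis unfolding c3 by simp
qed

end


lemma Omega1_Omega0: "Omega1 a n G k = Omega0 a n (\<lambda>i. G i k)"
  by (simp add: Omega1_def Omega0_def)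

theorem proposition2p4:
  fixes K S :: "'u::ring_1 set" and x \<alpha> :: "nat \<Rightarrow> 'u" and n :: nat and p :: int
  assumes "1 \<le> n" and "LR_env K S x \<alpha> n" and "0 \<le> p"
  shows "(\<forall>u f. u \<in> Fil S \<alpha> n p \<and> (\<forall>I\<in>idx_deg n p. f I \<in> S) \<and>
            u - (\<Sum>I\<in>idx_deg n p. f I * mpow \<alpha> n I) \<in> Fil S \<alpha> n (p - 1)
          \<longrightarrow> (\<lambda>k. d0 x u k -
                 (\<Sum>J\<in>idx_deg n (p - 1).
                    d0 x (Omega0 \<alpha> n (\<lambda>i. of_nat (J i + 1) * f (incI J i))) k * mpow \<alpha> n J))
              \<in> FX1 S \<alpha> n (p - 2))
       \<and> (\<forall>\<omega> f. \<omega> \<in> FX1 S \<alpha> n p \<and> (\<forall>I\<in>idx_deg n p. \<forall>l\<in>{1..n}. f I l \<in> S) \<and>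
            (\<lambda>l. \<omega> l - (\<Sum>I\<in>idx_deg n p. f I l * mpow \<alpha> n I)) \<in> FX1 S \<alpha> n (p - 1)
          \<longrightarrow> (\<lambda>k l. d1 x \<omega> k l -
                 (\<Sum>J\<in>idx_deg n (p - 1).
                    d1 x (Omega1 \<alpha> n (\<lambda>i m. of_nat (J i + 1) * f (incI J i) m)) k l * mpow \<alpha> n J))
              \<in> FX2 S \<alpha> n (p - 2))"
proof -
  interpret lr K S x \<alpha> n by (rule lr.intro[OF assms(2)])
  show ?thesis
  proof (intro conjI allI impI)
    fix u f
    assume h: "u \<in> Fil S \<alpha> n p \<and> (\<forall>I\<in>idx_deg n p. f I \<in> S) \<and>
            u - (\<Sum>I\<in>idx_deg n p. f I * mpow \<alpha> n I) \<in> Fil S \<alpha> n (p - 1)"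
    show "(\<lambda>k. d0 x u k -
                 (\<Sum>J\<in>idx_deg n (p - 1).
                    d0 x (Omega0 \<alpha> n (\<lambda>i. of_nat (J i + 1) * f (incI J i))) k * mpow \<alpha> n J))
              \<in> FX1 S \<alpha> n (p - 2)"
      unfolding FX1_def mem_Collect_eq
    proof (intro ballI)
      fix k assume k: "k \<in> {1..n}"
      have "comm u (x k) - (\<Sum>J\<in>idx_deg n (p - 1).
            comm (Omega0 \<alpha> n (\<lambda>i. of_nat (J i + 1) * f (incI J i))) (x k) * mpow \<alpha> n J) \<in> F (p - 2)"
        using h k by (intro core x_S) auto
      then show "d0 x u k - (\<Sum>J\<in>idx_deg n (p - 1).
                    d0 x (Omega0 \<alpha> n (\<lambda>i. of_nat (J i + 1) * f (incI J i))) k * mpow \<alpha> n J) \<in> F (p - 2)"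
        by (simp add: d0_def)
    qed
  next
    fix \<omega> f
    assume h: "\<omega> \<in> FX1 S \<alpha> n p \<and> (\<forall>I\<in>idx_deg n p. \<forall>l\<in>{1..n}. f I l \<in> S) \<and>
            (\<lambda>l. \<omega> l - (\<Sum>I\<in>idx_deg n p. f I l * mpow \<alpha> n I)) \<in> FX1 S \<alpha> n (p - 1)"
    have hf: "\<forall>I\<in>idx_deg n p. f I k \<in> S" if "k \<in> {1..n}" for k using h that by auto
    have hu: "\<omega> k - (\<Sum>I\<in>idx_deg n p. f I k * mpow \<alpha> n I) \<in> F (p - 1)" if "k \<in> {1..n}" for k
      using h that unfolding FX1_def by auto
    have C: "comm (\<omega> k) (x l) - (\<Sum>J\<in>idx_deg n (p - 1).
            comm (Omega0 \<alpha> n (\<lambda>i. of_nat (J i + 1) * f (incI J i) k)) (x l) * mpow \<alpha> n J) \<in> F (p - 2)"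
      if "k \<in> {1..n}" "l \<in> {1..n}" for k l
      using hf[OF that(1)] hu[OF that(1)] x_S that(2) by (intro core[where f = "\<lambda>I. f I k"]) auto
    show "(\<lambda>k l. d1 x \<omega> k l -
                 (\<Sum>J\<in>idx_deg n (p - 1).
                    d1 x (Omega1 \<alpha> n (\<lambda>i m. of_nat (J i + 1) * f (incI J i) m)) k l * mpow \<alpha> n J))
              \<in> FX2 S \<alpha> n (p - 2)"
      unfolding FX2_def mem_Collect_eq
    proof (intro allI impI)
      fix k l assume kl: "1 \<le> k \<and> k < l \<and> l \<le> n"
      then have k: "k \<in> {1..n}" and l: "l \<in> {1..n}" by auto
      let ?A = "\<lambda>k l. comm (\<omega> k) (x l) - (\<Sum>J\<in>idx_deg n (p - 1).
            comm (Omega0 \<alpha> n (\<lambda>i. of_nat (J i + 1) * f (incI J i) k)) (x l) * mpow \<alpha> n J)"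
      have eq: "d1 x \<omega> k l -
                 (\<Sum>J\<in>idx_deg n (p - 1).
                    d1 x (Omega1 \<alpha> n (\<lambda>i m. of_nat (J i + 1) * f (incI J i) m)) k l * mpow \<alpha> n J)
           = ?A k l - ?A l k"
        by (simp add: d1_def Omega1_Omega0 left_diff_distrib sum_subtractf)
      show "d1 x \<omega> k l -
                 (\<Sum>J\<in>idx_deg n (p - 1).
                    d1 x (Omega1 \<alpha> n (\<lambda>i m. of_nat (J i + 1) * f (incI J i) m)) k l * mpow \<alpha> n J)
           \<in> F (p - 2)"
        unfolding eq by (intro Fil_diff C k l)
    qed
  qed
qed


end
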